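(* Let $B=\bigoplus_{i\in\mathbb{Z}}B_i$ be a $\mathbb{Z}$-graded noetherian normal integral domain of characteristic zero with $e(B)=1$. Let $d\in\mathbb{N}\setminus\{0,1\}$ and assume that $d$ is a unit of $B$ and that no height-$1$ prime ideal of $B$ contains $\mathcal{X}_d$. Then every derivation $\delta:B^{(d)}\to B^{(d)}$ extends uniquely to a derivation $D:B\to B$, and if $\delta$ is locally nilpotent then so is $D$.
   Context: $e(B)=\gcd\{i\in\mathbb{Z}:B_i\neq0\}$. $B^{(d)}=\bigoplus_{i\in\mathbb{Z}}B_{di}$. $\mathcal{X}_d$ is the set of nonzero homogeneous $x\in B$ with $\gcd(\deg x,d)=1$. *)

theory Defs
  imports "HOL-Computational_Algebra.Fraction_Field" "HOL-Computational_Algebra.Polynomial"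
begin

text \<open>Ideals of a commutative ring (type-class idiom: the ring is the whole type).\<close>
definition is_ideal :: "'a::comm_ring_1 set \<Rightarrow> bool" where
  "is_ideal I \<longleftrightarrow> 0 \<in> I \<and> (\<forall>x\<in>I. \<forall>y\<in>I. x + y \<in> I) \<and> (\<forall>x\<in>I. - x \<in> I)
     \<and> (\<forall>r. \<forall>x\<in>I. r * x \<in> I)"

definition is_prime_ideal :: "'a::comm_ring_1 set \<Rightarrow> bool" where
  "is_prime_ideal P \<longleftrightarrow> is_ideal P \<and> P \<noteq> UNIV \<and> (\<forall>a b. a * b \<in> P \<longrightarrow> a \<in> P \<or> b \<in> P)"

definition height_one_prime :: "'a::idom set \<Rightarrow> bool" where
  "height_one_prime P \<longleftrightarrow> is_prime_ideal P \<and> P \<noteq> {0} \<and>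
     (\<forall>Q. is_prime_ideal Q \<and> Q \<subseteq> P \<longrightarrow> Q = {0} \<or> Q = P)"

definition noetherian_ring :: "'a::comm_ring_1 itself \<Rightarrow> bool" where
  "noetherian_ring _ \<longleftrightarrow> (\<forall>I :: nat \<Rightarrow> 'a set. (\<forall>n. is_ideal (I n)) \<and> (\<forall>n. I n \<subseteq> I (Suc n))
       \<longrightarrow> (\<exists>N. \<forall>n\<ge>N. I n = I N))"

definition normal_domain :: "'a::idom itself \<Rightarrow> bool" where
  "normal_domain _ \<longleftrightarrow> (\<forall>z :: 'a fract.
      (\<exists>p :: 'a poly. lead_coeff p = 1 \<and> poly (map_poly (\<lambda>a. Fraction_Field.Fract a 1) p) z = 0)
      \<longrightarrow> (\<exists>b. z = Fraction_Field.Fract b 1))"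

definition Z_grading :: "(int \<Rightarrow> 'a::comm_ring_1 set) \<Rightarrow> bool" where
  "Z_grading G \<longleftrightarrow>
     (\<forall>i. 0 \<in> G i \<and> (\<forall>x\<in>G i. \<forall>y\<in>G i. x + y \<in> G i) \<and> (\<forall>x\<in>G i. - x \<in> G i)) \<and>
     (\<forall>i j. \<forall>x\<in>G i. \<forall>y\<in>G j. x * y \<in> G (i + j)) \<and>
     (\<forall>x. \<exists>!f :: int \<Rightarrow> 'a. finite {i. f i \<noteq> 0} \<and> (\<forall>i. f i \<in> G i) \<and> x = (\<Sum>i\<in>{i. f i \<noteq> 0}. f i))"

definition grading_e :: "(int \<Rightarrow> 'a::zero set) \<Rightarrow> int" where
  "grading_e G = Gcd {i. G i \<noteq> {0}}"

definition veronese :: "(int \<Rightarrow> 'a::comm_ring_1 set) \<Rightarrow> nat \<Rightarrow> 'a set" where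
  "veronese G d = {x. \<exists>f :: int \<Rightarrow> 'a. finite {i. f i \<noteq> 0} \<and> (\<forall>i. f i \<in> G (int d * i))
                         \<and> x = (\<Sum>i\<in>{i. f i \<noteq> 0}. f i)}"

definition X_set :: "(int \<Rightarrow> 'a::comm_ring_1 set) \<Rightarrow> nat \<Rightarrow> 'a set" where
  "X_set G d = {x. x \<noteq> 0 \<and> (\<exists>i. x \<in> G i \<and> coprime i (int d))}"

definition derivation_on :: "'a::comm_ring_1 set \<Rightarrow> ('a \<Rightarrow> 'a) \<Rightarrow> bool" where
  "derivation_on S \<delta> \<longleftrightarrow> (\<forall>x\<in>S. \<delta> x \<in> S) \<and>
     (\<forall>x\<in>S. \<forall>y\<in>S. \<delta> (x + y) = \<delta> x + \<delta> y) \<and>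
     (\<forall>x\<in>S. \<forall>y\<in>S. \<delta> (x * y) = x * \<delta> y + y * \<delta> x)"

definition locally_nilpotent_on :: "'a::comm_ring_1 set \<Rightarrow> ('a \<Rightarrow> 'a) \<Rightarrow> bool" where
  "locally_nilpotent_on S \<delta> \<longleftrightarrow> (\<forall>x\<in>S. \<exists>n. (\<delta> ^^ n) x = 0)"

end

theory Submission
  imports Defs "HOL-Computational_Algebra.Polynomial_Factorial"
begin

lemma noeth_max:
  fixes F :: "'a::comm_ring_1 set set"
  assumes "noetherian_ring TYPE('a)" "F \<noteq> {}" "\<forall>I\<in>F. is_ideal I"
  shows "\<exists>P\<in>F. \<forall>Q\<in>F. P \<subseteq> Q \<longrightarrow> Q = P"
proof (rule ccontr)
  assume "\<not> ?thesis"
  hence ex: "\<forall>X\<in>F. \<exists>Y\<in>F. X \<subset> Y" by blast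
  define nxt where "nxt X = (SOME Y. Y \<in> F \<and> X \<subset> Y)" for X
  define f where "f n = (nxt ^^ n) (SOME X. X \<in> F)" for n
  have nxt: "nxt X \<in> F \<and> X \<subset> nxt X" if "X \<in> F" for X
    unfolding nxt_def using someI_ex[of "\<lambda>Y. Y \<in> F \<and> X \<subset> Y"] ex that by blast
  have f0: "f n \<in> F" for n
  proof (induction n)
    case 0 then show ?case using assms(2) some_in_eq[of F] by (simp add: f_def)
  next
    case (Suc n) then show ?case using nxt by (simp add: f_def)
  qed
  have fs: "f n \<subset> f (Suc n)" for n using nxt[OF f0[of n]] by (simp add: f_def)
  have "\<exists>N. \<forall>n\<ge>N. f n = f N"
    using assms(1) f0 fs assms(3) unfolding noetherian_ring_def by blast
  then obtain N where "\<forall>n\<ge>N. f n = f N" by blast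
  hence "f (Suc N) = f N" using le_SucI[OF order.refl] by blast
  with fs[of N] show False by simp
qed

lemma fract_poly_sum: "fract_poly (\<Sum>k\<in>A. p k) = (\<Sum>k\<in>A. fract_poly (p k))"
  by (induction A rule: infinite_finite_induct) auto

lemma integral_from_stable:
  fixes b c q0 :: "'a::idom"
  assumes noeth: "noetherian_ring TYPE('a)" and nrm: "normal_domain TYPE('a)"
    and b0: "b \<noteq> 0" and Qi: "is_ideal Q" and q0: "q0 \<in> Q" "q0 \<noteq> 0"
    and st: "\<forall>q\<in>Q. \<exists>q'\<in>Q. b * q' = c * q"
  shows "b dvd c"
proof -
  define nx where "nx q = (SOME q'. q' \<in> Q \<and> b * q' = c * q)" for q
  have nx: "nx q \<in> Q \<and> b * nx q = c * q" if "q \<in> Q" for q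
    unfolding nx_def using someI_ex[of "\<lambda>q'. q' \<in> Q \<and> b * q' = c * q"] st that by blast
  define s where "s n = (nx ^^ n) q0" for n
  have sQ: "s n \<in> Q" for n by (induction n) (auto simp: s_def q0 nx)
  have sS: "b * s (Suc n) = c * s n" for n using nx[OF sQ[of n]] by (simp add: s_def)
  define w where "w = to_fract c / to_fract b"
  have bf: "to_fract b \<noteq> 0" using b0 by simp
  have sw: "to_fract (s n) = to_fract q0 * w ^ n" for n
  proof (induction n)
    case 0 then show ?case by (simp add: s_def)
  next
    case (Suc n)
    have "to_fract b * to_fract (s (Suc n)) = to_fract c * to_fract (s n)"
      using arg_cong[OF sS[of n], of to_fract] by simp
    hence "to_fract (s (Suc n)) = to_fract c * to_fract (s n) / to_fract b"
      using bf by (simp add: field_simps)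
    then show ?case using Suc by (simp add: w_def field_simps)
  qed
  define J where "J n = {y. \<exists>r. to_fract y = to_fract q0 * (\<Sum>k\<le>n. to_fract (r k) * w ^ k)}" for n
  have Ji: "is_ideal (J n)" for n
    unfolding is_ideal_def
  proof (intro conjI ballI allI)
    show "0 \<in> J n" unfolding J_def by (rule CollectI, rule exI[of _ "\<lambda>_. 0"]) simp
  next
    fix x y assume "x \<in> J n" "y \<in> J n"
    then obtain r1 r2 where "to_fract x = to_fract q0 * (\<Sum>k\<le>n. to_fract (r1 k) * w ^ k)"
      "to_fract y = to_fract q0 * (\<Sum>k\<le>n. to_fract (r2 k) * w ^ k)" unfolding J_def by blast
    then show "x + y \<in> J n" unfolding J_def
      by (intro CollectI exI[of _ "\<lambda>k. r1 k + r2 k"]) (simp add: sum.distrib distrib_left distrib_right)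
  next
    fix x assume "x \<in> J n"
    then obtain r1 where "to_fract x = to_fract q0 * (\<Sum>k\<le>n. to_fract (r1 k) * w ^ k)"
      unfolding J_def by blast
    then show "- x \<in> J n" unfolding J_def
      by (intro CollectI exI[of _ "\<lambda>k. - r1 k"]) (simp add: sum_negf)
  next
    fix x t assume "x \<in> J n"
    then obtain r1 where "to_fract x = to_fract q0 * (\<Sum>k\<le>n. to_fract (r1 k) * w ^ k)"
      unfolding J_def by blast
    then show "t * x \<in> J n" unfolding J_def
      by (intro CollectI exI[of _ "\<lambda>k. t * r1 k"]) (simp add: sum_distrib_left mult_ac)
  qed
  have Jm: "J n \<subseteq> J (Suc n)" for n
  proof
    fix y assume "y \<in> J n"
    then obtain r where r: "to_fract y = to_fract q0 * (\<Sum>k\<le>n. to_fract (r k) * w ^ k)"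
      unfolding J_def by blast
    show "y \<in> J (Suc n)" unfolding J_def
      by (intro CollectI exI[of _ "\<lambda>k. if k \<le> n then r k else 0"]) (simp add: r)
  qed
  obtain N where N: "\<forall>n\<ge>N. J n = J N"
    using noeth Ji Jm unfolding noetherian_ring_def by blast
  have "s (Suc N) \<in> J (Suc N)" unfolding J_def
  proof (intro CollectI exI[of _ "\<lambda>k. if k = Suc N then 1 else 0"])
    have "(\<Sum>k\<le>Suc N. to_fract (if k = Suc N then 1 else 0) * w ^ k) = w ^ Suc N"
      by (simp add: if_distrib cong: if_cong)
    then show "to_fract (s (Suc N)) = to_fract q0 * (\<Sum>k\<le>Suc N. to_fract (if k = Suc N then 1 else 0) * w ^ k)"
      using sw by simp
  qed
  moreover have "J (Suc N) = J N" using N le_SucI[OF order.refl] by blast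
  ultimately have "s (Suc N) \<in> J N" by simp
  then obtain r where r: "to_fract q0 * w ^ Suc N = to_fract q0 * (\<Sum>k\<le>N. to_fract (r k) * w ^ k)"
    unfolding J_def using sw by auto
  have q0f: "to_fract q0 \<noteq> 0" using q0 by simp
  have wr: "w ^ Suc N = (\<Sum>k\<le>N. to_fract (r k) * w ^ k)" using r q0f by simp
  define p where "p = monom (1::'a) (Suc N) - (\<Sum>k\<le>N. monom (r k) k)"
  have dq: "degree (\<Sum>k\<le>N. monom (r k) k) \<le> N"
    by (rule degree_sum_le) (auto simp: degree_monom_le intro: order.trans[OF degree_monom_le])
  have dp: "degree p = Suc N" unfolding p_def
    using degree_add_eq_left[of "- (\<Sum>k\<le>N. monom (r k) k)" "monom (1::'a) (Suc N)"] dq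
    by (simp add: degree_monom_eq)
  have "coeff p (Suc N) = 1" unfolding p_def using dq
    by (simp add: coeff_eq_0)
  hence lc: "lead_coeff p = 1" using dp by simp
  have ev: "poly (map_poly (\<lambda>a. Fraction_Field.Fract a 1) p) w = 0"
  proof -
    have e: "(\<lambda>a. Fraction_Field.Fract a 1) = (to_fract :: 'a \<Rightarrow> 'a fract)" by (simp add: fun_eq_iff to_fract_def)
    have "poly (fract_poly p) w = w ^ Suc N - (\<Sum>k\<le>N. to_fract (r k) * w ^ k)"
      unfolding p_def by (simp add: fract_poly_sum map_poly_monom poly_sum poly_monom)
    then show ?thesis using wr e by simp
  qed
  obtain e where "w = Fraction_Field.Fract e 1" using nrm lc ev unfolding normal_domain_def by blast
  hence "to_fract c = to_fract b * to_fract e" using bf by (simp add: w_def to_fract_def[symmetric] field_simps)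
  hence "c = b * e" by (metis to_fract_eq_iff to_fract_mult)
  then show ?thesis by simp
qed

lemma colon_ideal: "is_ideal {r. b dvd r * (c::'a::comm_ring_1)}"
  unfolding is_ideal_def
proof (intro conjI ballI allI)
  show "0 \<in> {r. b dvd r * c}" by simp
next
  fix x y assume "x \<in> {r. b dvd r * c}" "y \<in> {r. b dvd r * c}"
  then show "x + y \<in> {r. b dvd r * c}" by (simp add: distrib_right dvd_add)
next
  fix x assume "x \<in> {r. b dvd r * c}"
  then show "- x \<in> {r. b dvd r * c}" by simp
next
  fix x r assume "x \<in> {r. b dvd r * c}"
  then show "r * x \<in> {r. b dvd r * c}" by (simp add: mult.assoc dvd_mult)
qed

lemma krull_div:
  fixes a b :: "'a::idom"
  assumes noeth: "noetherian_ring TYPE('a)" and nrm: "normal_domain TYPE('a)"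
    and b0: "b \<noteq> 0" and H: "\<forall>P. height_one_prime P \<longrightarrow> \<not> {r. b dvd r * a} \<subseteq> P"
  shows "b dvd a"
proof (rule ccontr)
  assume nd: "\<not> b dvd a"
  define F where "F = {{r. b dvd r * c} | c. a dvd c \<and> \<not> b dvd c}"
  have "{r. b dvd r * a} \<in> F" unfolding F_def using nd by auto
  hence "F \<noteq> {}" by blast
  moreover have "\<forall>I\<in>F. is_ideal I" unfolding F_def using colon_ideal by auto
  ultimately obtain P where PF: "P \<in> F" and Pmax: "\<forall>Q\<in>F. P \<subseteq> Q \<longrightarrow> Q = P"
    using noeth_max[OF noeth] by blast
  then obtain c where Pc: "P = {r. b dvd r * c}" and ac: "a dvd c" and bc: "\<not> b dvd c"
    unfolding F_def by auto
  have IP: "{r. b dvd r * a} \<subseteq> P"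
  proof
    fix r assume "r \<in> {r. b dvd r * a}"
    hence "b dvd r * a" by simp
    moreover obtain k where "c = a * k" using ac by (elim dvdE)
    ultimately have "b dvd r * c" by (simp add: mult.assoc[symmetric])
    then show "r \<in> P" unfolding Pc by simp
  qed
  have Pi: "is_ideal P" unfolding Pc by (rule colon_ideal)
  have "1 \<notin> P" using bc unfolding Pc by simp
  hence Pne: "P \<noteq> UNIV" by blast
  have Pprime: "a' * b' \<in> P \<longrightarrow> a' \<in> P \<or> b' \<in> P" for a' b'
  proof (intro impI)
    assume ab: "a' * b' \<in> P"
    show "a' \<in> P \<or> b' \<in> P"
    proof (cases "a' \<in> P")
      case False
      have "a dvd a' * c" using ac by (rule dvd_mult)
      moreover have "\<not> b dvd a' * c" using False unfolding Pc by simp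
      ultimately have "{r. b dvd r * (a' * c)} \<in> F"
        unfolding F_def by blast
      moreover have "P \<subseteq> {r. b dvd r * (a' * c)}"
      proof
        fix r assume "r \<in> P"
        hence "b dvd r * c" unfolding Pc by simp
        hence "b dvd a' * (r * c)" by (rule dvd_mult)
        then show "r \<in> {r. b dvd r * (a' * c)}" by (simp add: mult_ac)
      qed
      ultimately have "{r. b dvd r * (a' * c)} = P" using Pmax by blast
      moreover have "b' \<in> {r. b dvd r * (a' * c)}" using ab unfolding Pc by (simp add: mult_ac)
      ultimately show ?thesis by blast
    qed simp
  qed
  have bP: "b \<in> P" unfolding Pc by simp
  have Pp: "is_prime_ideal P" unfolding is_prime_ideal_def using Pi Pne Pprime by blast
  have P0: "P \<noteq> {0}" using bP b0 by blast
  have Pht: "Q = {0} \<or> Q = P" if Qp: "is_prime_ideal Q" and QP: "Q \<subseteq> P" for Q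
  proof (rule ccontr)
    assume "\<not> (Q = {0} \<or> Q = P)"
    hence Q0: "Q \<noteq> {0}" and QnP: "Q \<noteq> P" by auto
    have Qi: "is_ideal Q" using Qp unfolding is_prime_ideal_def by blast
    have "0 \<in> Q" using Qi unfolding is_ideal_def by blast
    then obtain q0 where q0: "q0 \<in> Q" "q0 \<noteq> 0" using Q0 by blast
    obtain p' where p': "p' \<in> P" "p' \<notin> Q" using QP QnP by blast
    then obtain s where s: "p' * c = b * s" unfolding Pc by (auto elim!: dvdE)
    have st: "\<forall>q\<in>Q. \<exists>q'\<in>Q. b * q' = c * q"
    proof
      fix q assume qQ: "q \<in> Q"
      then obtain q' where q': "q * c = b * q'" using QP unfolding Pc by (auto elim!: dvdE)
      have "b * (q' * p') = b * (q * s)" using q' s by (metis mult.assoc mult.commute)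
      hence "q' * p' = q * s" using b0 by simp
      moreover have "q * s \<in> Q" using Qi qQ unfolding is_ideal_def by (metis mult.commute)
      ultimately have "q' * p' \<in> Q" by simp
      hence "q' \<in> Q" using Qp p'(2) unfolding is_prime_ideal_def by blast
      then show "\<exists>q'\<in>Q. b * q' = c * q" using q' by (metis mult.commute)
    qed
    have "b dvd c" by (rule integral_from_stable[OF noeth nrm b0 Qi q0 st])
    with bc show False by simp
  qed
  have "height_one_prime P" unfolding height_one_prime_def using Pp P0 Pht by blast
  with H IP show False by blast
qed

locale grd =
  fixes G :: "int \<Rightarrow> 'a::{idom, ring_char_0} set"
  assumes grading: "Z_grading G"
begin

lemma G_zero: "0 \<in> G i" using grading unfolding Z_grading_def by blast
lemma G_add: "x \<in> G i \<Longrightarrow> y \<in> G i \<Longrightarrow> x + y \<in> G i" using grading unfolding Z_grading_def by blast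
lemma G_neg: "x \<in> G i \<Longrightarrow> - x \<in> G i" using grading unfolding Z_grading_def by blast
lemma G_mult: "x \<in> G i \<Longrightarrow> y \<in> G j \<Longrightarrow> x * y \<in> G (i + j)" using grading unfolding Z_grading_def by blast
lemma G_ex1: "\<exists>!f :: int \<Rightarrow> 'a. finite {i. f i \<noteq> 0} \<and> (\<forall>i. f i \<in> G i) \<and> x = (\<Sum>i\<in>{i. f i \<noteq> 0}. f i)"
  using grading unfolding Z_grading_def by blast

definition comp :: "'a \<Rightarrow> int \<Rightarrow> 'a" where
  "comp x = (THE f. finite {i. f i \<noteq> 0} \<and> (\<forall>i. f i \<in> G i) \<and> x = (\<Sum>i\<in>{i. f i \<noteq> 0}. f i))"

definition supp :: "'a \<Rightarrow> int set" where "supp x = {i. comp x i \<noteq> 0}"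

lemma comp_prop: "finite (supp x) \<and> (\<forall>i. comp x i \<in> G i) \<and> x = (\<Sum>i\<in>supp x. comp x i)"
  unfolding comp_def supp_def by (rule theI'[OF G_ex1])

lemma supp_fin: "finite (supp x)" using comp_prop by blast
lemma comp_G: "comp x i \<in> G i" using comp_prop by blast

lemma comp_decomp: "(\<Sum>i\<in>supp x. comp x i) = x" using comp_prop[of x] by metis

lemma comp_sumS: assumes "finite S" "supp x \<subseteq> S" shows "x = (\<Sum>i\<in>S. comp x i)"
proof -
  have "(\<Sum>i\<in>supp x. comp x i) = (\<Sum>i\<in>S. comp x i)"
    by (rule sum.mono_neutral_left[OF assms(1) assms(2)]) (simp add: supp_def)
  then show ?thesis by (simp only: comp_decomp)
qed

lemma comp_uniq:
  assumes "finite S" "\<forall>i. f i \<in> G i" "\<forall>i. i \<notin> S \<longrightarrow> f i = 0" "x = (\<Sum>i\<in>S. f i)"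
  shows "comp x = f"
proof -
  have sub: "{i. f i \<noteq> 0} \<subseteq> S" using assms(3) by blast
  have fin: "finite {i. f i \<noteq> 0}" using finite_subset[OF sub assms(1)] .
  have "x = (\<Sum>i\<in>{i. f i \<noteq> 0}. f i)"
    using assms(4) sum.mono_neutral_left[OF assms(1) sub, of f] by auto
  hence P: "finite {i. f i \<noteq> 0} \<and> (\<forall>i. f i \<in> G i) \<and> x = (\<Sum>i\<in>{i. f i \<noteq> 0}. f i)"
    using fin assms(2) by blast
  have Q: "finite {i. comp x i \<noteq> 0} \<and> (\<forall>i. comp x i \<in> G i) \<and> x = (\<Sum>i\<in>{i. comp x i \<noteq> 0}. comp x i)"
    using comp_prop[of x] unfolding supp_def by blast
  show ?thesis using G_ex1[of x] P Q by blast
qed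

lemma comp_hom: "x \<in> G i \<Longrightarrow> comp x = (\<lambda>j. if j = i then x else 0)"
  by (rule comp_uniq[of "{i}"]) (auto simp: G_zero)

lemma comp_zero: "comp 0 = (\<lambda>j. 0)"
  using comp_hom[OF G_zero[of 0]] by (simp add: fun_eq_iff)

lemma comp_add: "comp (x + y) = (\<lambda>j. comp x j + comp y j)"
proof (rule comp_uniq[of "supp x \<union> supp y"])
  show "finite (supp x \<union> supp y)" using supp_fin by simp
  show "\<forall>i. comp x i + comp y i \<in> G i" using comp_G G_add by blast
  show "\<forall>i. i \<notin> supp x \<union> supp y \<longrightarrow> comp x i + comp y i = 0" by (simp add: supp_def)
  have "x = (\<Sum>i\<in>supp x \<union> supp y. comp x i)" "y = (\<Sum>i\<in>supp x \<union> supp y. comp y i)"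
    using comp_sumS supp_fin by auto
  then show "x + y = (\<Sum>i\<in>supp x \<union> supp y. comp x i + comp y i)" by (simp add: sum.distrib)
qed

lemma comp_sum: "finite T \<Longrightarrow> comp (\<Sum>s\<in>T. g s) = (\<lambda>j. \<Sum>s\<in>T. comp (g s) j)"
  by (induction T rule: finite_induct) (simp_all add: comp_zero comp_add)

lemma comp_neg: "comp (- x) = (\<lambda>j. - comp x j)"
proof -
  have "\<forall>j. comp (- x) j + comp x j = 0"
  proof
    fix j
    have "comp (- x + x) j = 0" by (simp add: comp_zero)
    then show "comp (- x) j + comp x j = 0" by (simp only: comp_add)
  qed
  then show ?thesis by (simp add: fun_eq_iff eq_neg_iff_add_eq_0)
qed

lemma comp_of_nat: "comp (of_nat n * x) = (\<lambda>j. of_nat n * comp x j)"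
  by (induction n) (simp_all add: comp_zero comp_add distrib_right)

lemma comp_mult_hom:
  assumes g: "g \<in> G k"
  shows "comp (g * y) = (\<lambda>m. g * comp y (m - k))"
proof (rule comp_uniq[of "(\<lambda>j. j + k) ` supp y"])
  show "finite ((\<lambda>j. j + k) ` supp y)" using supp_fin by simp
  show "\<forall>i. g * comp y (i - k) \<in> G i" using G_mult[OF g comp_G] by (metis add.commute diff_add_cancel)
  show "\<forall>i. i \<notin> (\<lambda>j. j + k) ` supp y \<longrightarrow> g * comp y (i - k) = 0"
    by (auto simp: supp_def image_iff)
  have "g * y = g * (\<Sum>j\<in>supp y. comp y j)" by (simp only: comp_decomp)
  also have "\<dots> = (\<Sum>j\<in>supp y. g * comp y j)" by (rule sum_distrib_left)
  also have "\<dots> = (\<Sum>i\<in>(\<lambda>j. j + k) ` supp y. g * comp y (i - k))"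
    by (subst sum.reindex) (auto simp: inj_on_def)
  finally show "g * y = (\<Sum>i\<in>(\<lambda>j. j + k) ` supp y. g * comp y (i - k))" .
qed

lemma one_G0: "(1::'a) \<in> G 0"
proof -
  have "supp 1 \<noteq> {}" using comp_prop[of 1] by auto
  then obtain j0 where j0: "comp 1 j0 \<noteq> 0" unfolding supp_def by blast
  let ?g = "comp 1 j0"
  have "comp ?g = comp (?g * 1)" by simp
  hence "\<forall>m. (if m = j0 then ?g else 0) = ?g * comp 1 (m - j0)"
    using comp_hom[OF comp_G[of 1 j0]] comp_mult_hom[OF comp_G[of 1 j0], of 1] by (simp add: fun_eq_iff)
  hence z: "comp 1 j = 0" if "j \<noteq> 0" for j
    using spec[of _ "j + j0"] that j0 by (metis add_diff_cancel_right' add_cancel_right_left mult_eq_0_iff)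
  have "supp 1 \<subseteq> {0}" using z unfolding supp_def by blast
  hence "1 = (\<Sum>i\<in>{0}. comp 1 i)" by (intro comp_sumS) auto
  then show ?thesis using comp_G[of 1 0] by simp
qed

lemma G_pow: "x \<in> G i \<Longrightarrow> x ^ n \<in> G (int n * i)"
proof (induction n)
  case 0 then show ?case using one_G0 by simp
next
  case (Suc n)
  then have "x * x ^ n \<in> G (i + int n * i)" using G_mult by blast
  then show ?case by (simp add: algebra_simps)
qed

end

lemma der_add_aux: "derivation_on S D \<Longrightarrow> x \<in> S \<Longrightarrow> y \<in> S \<Longrightarrow> D (x + y) = D x + D y"
  unfolding derivation_on_def by blast

lemma der_zero: "derivation_on S D \<Longrightarrow> 0 \<in> S \<Longrightarrow> D 0 = 0"
  using der_add_aux[of S D 0 0] by simp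

lemma der_add: "derivation_on S D \<Longrightarrow> x \<in> S \<Longrightarrow> y \<in> S \<Longrightarrow> D (x + y) = D x + D y"
  unfolding derivation_on_def by blast

lemma der_mult: "derivation_on S D \<Longrightarrow> x \<in> S \<Longrightarrow> y \<in> S \<Longrightarrow> D (x * y) = x * D y + y * D x"
  unfolding derivation_on_def by blast

lemma der_in: "derivation_on S D \<Longrightarrow> x \<in> S \<Longrightarrow> D x \<in> S"
  unfolding derivation_on_def by blast

lemma der_sum:
  assumes "derivation_on S D" "0 \<in> S" "\<forall>x\<in>S. \<forall>y\<in>S. x + y \<in> S" "finite T" "\<forall>t\<in>T. f t \<in> S"
  shows "D (\<Sum>t\<in>T. f t) = (\<Sum>t\<in>T. D (f t)) \<and> (\<Sum>t\<in>T. f t) \<in> S"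
  using assms(4,5)
proof (induction T rule: finite_induct)
  case empty then show ?case using der_zero[OF assms(1,2)] assms(2) by simp
next
  case (insert t T)
  then show ?case using der_add[OF assms(1)] assms(3) by simp
qed

lemma der_neg:
  assumes "derivation_on S D" "0 \<in> S" "x \<in> S" "- x \<in> S"
  shows "D (- x) = - D x"
proof -
  have "D (- x + x) = D (- x) + D x" using der_add[OF assms(1) assms(4) assms(3)] .
  then show ?thesis using der_zero[OF assms(1,2)] by (simp add: eq_neg_iff_add_eq_0)
qed

lemma der_of_nat:
  assumes "derivation_on S D" "0 \<in> S" "\<forall>x\<in>S. \<forall>y\<in>S. x + y \<in> S" "x \<in> S"
  shows "D (of_nat n * x) = of_nat n * D x \<and> of_nat n * x \<in> S"
proof (induction n)
  case 0 then show ?case using der_zero[OF assms(1,2)] assms(2) by simp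
next
  case (Suc n)
  then show ?case using der_add[OF assms(1) assms(4), of "of_nat n * x"] assms(3,4)
    by (simp add: distrib_right)
qed

lemma der_pow:
  assumes "derivation_on S D" "\<forall>k. x ^ Suc k \<in> S"
  shows "D (x ^ Suc n) = of_nat (Suc n) * x ^ n * D x"
proof (induction n)
  case 0 then show ?case by simp
next
  case (Suc n)
  have xS: "x \<in> S" using spec[OF assms(2), of 0] by simp
  have "D (x ^ Suc (Suc n)) = D (x * x ^ Suc n)" by simp
  also have "\<dots> = x * D (x ^ Suc n) + x ^ Suc n * D x"
    using der_mult[OF assms(1) xS assms(2)[rule_format, of n]] .
  also have "\<dots> = of_nat (Suc (Suc n)) * x ^ Suc n * D x" using Suc by (simp add: algebra_simps)
  finally show ?case .
qed

locale gsetup = grd G for G :: "int \<Rightarrow> 'a::{idom, ring_char_0} set" +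
  fixes d :: nat and \<delta> :: "'a \<Rightarrow> 'a"
  assumes d2: "d \<ge> 2" and der: "derivation_on (veronese G d) \<delta>"
begin

abbreviation "A \<equiv> veronese G d"

definition cls :: "int \<Rightarrow> 'a \<Rightarrow> bool" where
  "cls r x \<longleftrightarrow> (\<forall>j. comp x j \<noteq> 0 \<longrightarrow> int d dvd (j - r))"

lemma d0: "d > 0" using d2 by simp

lemma cls_zero: "cls r 0" by (simp add: cls_def comp_zero)

lemma cls_add: "cls r x \<Longrightarrow> cls r y \<Longrightarrow> cls r (x + y)"
  unfolding cls_def comp_add
proof (intro allI impI)
  fix j assume a: "\<forall>j. comp x j \<noteq> 0 \<longrightarrow> int d dvd j - r" "\<forall>j. comp y j \<noteq> 0 \<longrightarrow> int d dvd j - r"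
    and "comp x j + comp y j \<noteq> 0"
  then have "comp x j \<noteq> 0 \<or> comp y j \<noteq> 0" by auto
  then show "int d dvd j - r" using a by blast
qed

lemma cls_neg: "cls r x \<Longrightarrow> cls r (- x)"
  unfolding cls_def comp_neg by simp

lemma cls_sum: "finite T \<Longrightarrow> \<forall>t\<in>T. cls r (f t) \<Longrightarrow> cls r (\<Sum>t\<in>T. f t)"
  by (induction T rule: finite_induct) (auto simp: cls_zero cls_add)

lemma cls_hom: "h \<in> G j \<Longrightarrow> cls j h"
  unfolding cls_def by (simp add: comp_hom)

lemma cls_shift: "cls r x \<Longrightarrow> int d dvd (r - r') \<Longrightarrow> cls r' x"
  unfolding cls_def
proof (intro allI impI)
  fix j assume a: "\<forall>j. comp x j \<noteq> 0 \<longrightarrow> int d dvd j - r" "int d dvd r - r'" "comp x j \<noteq> 0"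
  then have "int d dvd (j - r) + (r - r')" by (intro dvd_add) auto
  then show "int d dvd j - r'" by simp
qed

lemma cls_hom_mult:
  assumes g: "g \<in> G k" and y: "cls s y"
  shows "cls (k + s) (g * y)"
  unfolding cls_def comp_mult_hom[OF g]
proof (intro allI impI)
  fix m assume "g * comp y (m - k) \<noteq> 0"
  hence "comp y (m - k) \<noteq> 0" by auto
  hence "int d dvd (m - k - s)" using y unfolding cls_def by blast
  then show "int d dvd (m - (k + s))" by (simp add: algebra_simps)
qed

lemma cls_mult:
  assumes x: "cls r x" and y: "cls s y"
  shows "cls (r + s) (x * y)"
proof -
  have "x * y = (\<Sum>i\<in>supp x. comp x i * y)"
  proof -
    have "x * y = (\<Sum>i\<in>supp x. comp x i) * y" by (simp only: comp_decomp)
    then show ?thesis by (simp add: sum_distrib_right)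
  qed
  moreover have "cls (r + s) (comp x i * y)" if "i \<in> supp x" for i
  proof -
    have "int d dvd (i - r)" using x that unfolding cls_def supp_def by blast
    moreover have "cls (i + s) (comp x i * y)" by (rule cls_hom_mult[OF comp_G y])
    ultimately show ?thesis by (rule_tac cls_shift) (auto simp: algebra_simps)
  qed
  ultimately show ?thesis using cls_sum[OF supp_fin, where r="r + s" and f="\<lambda>i. comp x i * y"] by simp
qed

lemma A_cls: "x \<in> A \<longleftrightarrow> cls 0 x"
proof
  assume "x \<in> A"
  then obtain f where f: "finite {i. f i \<noteq> 0}" "\<forall>i. f i \<in> G (int d * i)" "x = (\<Sum>i\<in>{i. f i \<noteq> 0}. f i)"
    unfolding veronese_def by blast
  have "cls 0 (f i)" for i using cls_hom[OF spec[OF f(2), of i]] by (rule cls_shift) simp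
  then show "cls 0 x" using f(1,3) cls_sum by metis
next
  assume c: "cls 0 x"
  define f where "f i = comp x (int d * i)" for i
  have inj: "inj (\<lambda>i::int. int d * i)" using d0 by (auto simp: inj_def)
  have im: "(\<lambda>i. int d * i) ` {i. f i \<noteq> 0} = supp x"
  proof
    show "(\<lambda>i. int d * i) ` {i. f i \<noteq> 0} \<subseteq> supp x" by (auto simp: f_def supp_def)
    show "supp x \<subseteq> (\<lambda>i. int d * i) ` {i. f i \<noteq> 0}"
    proof
      fix j assume j: "j \<in> supp x"
      then obtain i where "j = int d * i" using c unfolding cls_def supp_def by auto
      then show "j \<in> (\<lambda>i. int d * i) ` {i. f i \<noteq> 0}" using j by (auto simp: f_def supp_def)
    qed
  qed
  have fin: "finite {i. f i \<noteq> 0}"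
    using finite_imageD[of "\<lambda>i. int d * i" "{i. f i \<noteq> 0}"] im supp_fin inj_on_subset[OF inj] by auto
  have "x = (\<Sum>j\<in>supp x. comp x j)" by (simp only: comp_decomp)
  also have "\<dots> = (\<Sum>i\<in>{i. f i \<noteq> 0}. f i)"
    unfolding im[symmetric] by (subst sum.reindex) (auto simp: f_def intro: inj_on_subset[OF inj])
  finally have xs: "x = (\<Sum>i\<in>{i. f i \<noteq> 0}. f i)" .
  have fG: "\<forall>i. f i \<in> G (int d * i)" by (simp add: f_def comp_G)
  show "x \<in> A" unfolding veronese_def using fin fG xs by blast
qed

lemma A_zero: "0 \<in> A" using A_cls cls_zero by blast
lemma A_add: "x \<in> A \<Longrightarrow> y \<in> A \<Longrightarrow> x + y \<in> A" using A_cls cls_add by blast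
lemma A_neg: "x \<in> A \<Longrightarrow> - x \<in> A" using A_cls cls_neg by blast
lemma A_mult: "x \<in> A \<Longrightarrow> y \<in> A \<Longrightarrow> x * y \<in> A" using A_cls cls_mult[of 0 x 0 y] by simp
lemma A_hom: "h \<in> G j \<Longrightarrow> int d dvd j \<Longrightarrow> h \<in> A"
  using A_cls cls_hom cls_shift[of j h 0] by simp
lemma A_pow: "x \<in> A \<Longrightarrow> x ^ Suc k \<in> A"
  by (induction k) (auto simp: A_mult)
lemma A_addc: "\<forall>x\<in>A. \<forall>y\<in>A. x + y \<in> A" using A_add by blast

lemma dA: "x \<in> A \<Longrightarrow> \<delta> x \<in> A" using der der_in by blast
lemma d_zero: "\<delta> 0 = 0" using der_zero[OF der A_zero] .
lemma d_add: "x \<in> A \<Longrightarrow> y \<in> A \<Longrightarrow> \<delta> (x + y) = \<delta> x + \<delta> y" using der_add[OF der] .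
lemma d_mult: "x \<in> A \<Longrightarrow> y \<in> A \<Longrightarrow> \<delta> (x * y) = x * \<delta> y + y * \<delta> x" using der_mult[OF der] .
lemma d_pow: "x \<in> A \<Longrightarrow> \<delta> (x ^ Suc n) = of_nat (Suc n) * x ^ n * \<delta> x"
  using der_pow[OF der] A_pow by blast

end

lemma exists_k:
  fixes i j :: int
  assumes "coprime j (int d)" "d > 0"
  shows "\<exists>k::nat. int d dvd (i + int k * j)"
proof -
  obtain s t where st: "s * j + t * int d = gcd j (int d)" using bezout_int by blast
  hence st1: "s * j = 1 - t * int d" using assms(1) by simp
  define q where "q = (- i * s) div int d"
  have m: "(- i * s) mod int d = - i * s - int d * q" unfolding q_def by (simp add: minus_div_mult_eq_mod[symmetric])
  have nn: "(- i * s) mod int d \<ge> 0" using assms(2) by simp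
  define k where "k = nat ((- i * s) mod int d)"
  have ik: "int k = - i * s - int d * q" unfolding k_def using nn m by simp
  have "i + int k * j = i - i * (s * j) - int d * q * j" by (simp add: ik algebra_simps)
  also have "\<dots> = i - i * (1 - t * int d) - int d * q * j" by (simp only: st1)
  also have "\<dots> = int d * (i * t - q * j)" by (simp add: algebra_simps)
  finally have "i + int k * j = int d * (i * t - q * j)" .
  then have "int d dvd (i + int k * j)" unfolding dvd_def by blast
  then show ?thesis by blast
qed

lemma prime_pow_in:
  assumes "is_prime_ideal P" "u ^ n \<in> P"
  shows "u \<in> P"
  using assms(2)
proof (induction n)
  case 0
  then have "1 \<in> P" by simp
  hence "u * 1 \<in> P" using assms(1) unfolding is_prime_ideal_def is_ideal_def by blast
  then show ?case by simp
next
  case (Suc n)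
  then show ?case using assms(1) unfolding is_prime_ideal_def by auto
qed


locale gfull = gsetup G d \<delta> for G :: "int \<Rightarrow> 'a::{idom, ring_char_0} set" and d \<delta> +
  assumes noeth: "noetherian_ring TYPE('a)" and nrm: "normal_domain TYPE('a)"
    and dunit: "(of_nat d :: 'a) dvd 1" and H: "\<forall>P. height_one_prime P \<longrightarrow> \<not> X_set G d \<subseteq> P"
begin

lemma de: "d = Suc (d - 1)" using d2 by simp

lemma dnz: "(of_nat d :: 'a) \<noteq> 0" using d0 by simp

lemma dh_exists:
  assumes h: "h \<in> G i"
  shows "\<exists>y. of_nat d * h ^ (d - 1) * y = \<delta> (h ^ d)"
proof (cases "h = 0")
  case True
  have hd: "h ^ d = 0" using True d0 by simp
  show ?thesis by (rule exI[of _ 0]) (simp add: hd d_zero)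
next
  case False
  define e where "e = d - 1"
  have de': "d = Suc e" unfolding e_def by (rule de)
  define b where "b = (of_nat d :: 'a) * h ^ e"
  define a where "a = \<delta> (h ^ d)"
  have b0: "b \<noteq> 0" unfolding b_def using False dnz by simp
  have "b dvd a"
  proof (rule krull_div[OF noeth nrm b0], intro allI impI notI)
    fix P assume hp: "height_one_prime P" and sub: "{r. b dvd r * a} \<subseteq> P"
    have pp: "is_prime_ideal P" using hp unfolding height_one_prime_def by blast
    obtain u where u: "u \<in> X_set G d" "u \<notin> P" using H hp by blast
    then obtain j where uj: "u \<noteq> 0" "u \<in> G j" "coprime j (int d)" unfolding X_set_def by blast
    obtain k where k: "int d dvd (i + int k * j)" using exists_k[OF uj(3) d0] by blast
    define v where "v = u ^ k"
    have vG: "v \<in> G (int k * j)" unfolding v_def by (rule G_pow[OF uj(2)])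
    have hvA: "h * v \<in> A" using A_hom[OF G_mult[OF h vG] k] .
    have vdA: "v ^ d \<in> A" using A_hom[OF G_pow[OF vG, of d]] by simp
    have hdA: "h ^ d \<in> A" using A_hom[OF G_pow[OF h, of d]] by simp
    have e1: "\<delta> ((h * v) ^ d) = of_nat d * (h * v) ^ e * \<delta> (h * v)"
      using d_pow[OF hvA, of e] de' by simp
    have e2: "\<delta> ((h * v) ^ d) = h ^ d * \<delta> (v ^ d) + v ^ d * \<delta> (h ^ d)"
      using d_mult[OF hdA vdA] by (simp add: power_mult_distrib)
    have "v ^ d * a = of_nat d * (h * v) ^ e * \<delta> (h * v) - h ^ d * \<delta> (v ^ d)"
      using e1 e2 unfolding a_def by (simp add: algebra_simps)
    also have "\<dots> = h ^ e * (of_nat d * v ^ e * \<delta> (h * v) - h * \<delta> (v ^ d))"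
      unfolding de' by (simp add: power_mult_distrib algebra_simps)
    finally have va: "v ^ d * a = h ^ e * (of_nat d * v ^ e * \<delta> (h * v) - h * \<delta> (v ^ d))" .
    obtain w :: 'a where w: "1 = of_nat d * w" using dunit unfolding dvd_def by blast
    have "v ^ d * a = b * (w * (of_nat d * v ^ e * \<delta> (h * v) - h * \<delta> (v ^ d)))"
    proof -
      have "b * (w * (of_nat d * v ^ e * \<delta> (h * v) - h * \<delta> (v ^ d)))
          = (of_nat d * w) * (h ^ e * (of_nat d * v ^ e * \<delta> (h * v) - h * \<delta> (v ^ d)))"
        unfolding b_def by (simp add: algebra_simps)
      also have "\<dots> = v ^ d * a" using w va by simp
      finally show ?thesis by simp
    qed
    hence "b dvd v ^ d * a" by simp
    hence "v ^ d \<in> P" using sub by blast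
    hence "u ^ (k * d) \<in> P" unfolding v_def by (simp add: power_mult)
    hence "u \<in> P" by (rule prime_pow_in[OF pp])
    with u(2) show False by simp
  qed
  then obtain y where "a = b * y" by (elim dvdE)
  then show ?thesis unfolding a_def b_def e_def by (intro exI[of _ y]) simp
qed

definition Dh :: "'a \<Rightarrow> 'a" where
  "Dh h = (if h = 0 then 0 else (THE y. of_nat d * h ^ (d - 1) * y = \<delta> (h ^ d)))"

lemma Dh_zero: "Dh 0 = 0" by (simp add: Dh_def)

lemma Dh_unique:
  assumes "h \<noteq> 0" "of_nat d * h ^ (d - 1) * y = \<delta> (h ^ d)"
  shows "Dh h = y"
proof -
  have nz: "of_nat d * h ^ (d - 1) \<noteq> (0::'a)" using assms(1) dnz by simp
  have "(THE y. of_nat d * h ^ (d - 1) * y = \<delta> (h ^ d)) = y"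
  proof (rule the_equality)
    show "of_nat d * h ^ (d - 1) * y = \<delta> (h ^ d)" by (rule assms(2))
  next
    fix y' assume "of_nat d * h ^ (d - 1) * y' = \<delta> (h ^ d)"
    then have "of_nat d * h ^ (d - 1) * y' = of_nat d * h ^ (d - 1) * y" using assms(2) by simp
    then show "y' = y" by (rule mult_left_cancel[OF nz, THEN iffD1])
  qed
  then show ?thesis using assms(1) by (simp add: Dh_def)
qed

lemma Dh_eq:
  assumes "h \<in> G i"
  shows "of_nat d * h ^ (d - 1) * Dh h = \<delta> (h ^ d)"
proof (cases "h = 0")
  case True
  have hd: "h ^ d = 0" using True d0 by simp
  show ?thesis using d0 by (simp add: True d_zero Dh_zero power_0_left)
next
  case False
  obtain y where y: "of_nat d * h ^ (d - 1) * y = \<delta> (h ^ d)" using dh_exists[OF assms] by blast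
  then show ?thesis using Dh_unique[OF False y] by simp
qed

end

context gfull
begin

lemma Dh_A:
  assumes a: "a \<in> G j" and dj: "int d dvd j"
  shows "Dh a = \<delta> a"
proof (cases "a = 0")
  case True then show ?thesis by (simp add: Dh_zero d_zero)
next
  case False
  have aA: "a \<in> A" by (rule A_hom[OF a dj])
  have "\<delta> (a ^ Suc (d - 1)) = of_nat (Suc (d - 1)) * a ^ (d - 1) * \<delta> a" by (rule d_pow[OF aA])
  hence "of_nat d * a ^ (d - 1) * \<delta> a = \<delta> (a ^ d)" using de by simp
  then show ?thesis by (rule Dh_unique[OF False])
qed

lemma Dh_mult:
  assumes h: "h \<in> G i" and g: "g \<in> G j"
  shows "Dh (h * g) = h * Dh g + g * Dh h"
proof (cases "h = 0 \<or> g = 0")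
  case True then show ?thesis by (auto simp: Dh_zero)
next
  case False
  obtain e where de': "d = Suc e" using de by blast
  have hdA: "h ^ d \<in> A" using A_hom[OF G_pow[OF h, of d]] by simp
  have gdA: "g ^ d \<in> A" using A_hom[OF G_pow[OF g, of d]] by simp
  have Eh: "of_nat d * h ^ e * Dh h = \<delta> (h ^ d)" using Dh_eq[OF h] de' by simp
  have Eg: "of_nat d * g ^ e * Dh g = \<delta> (g ^ d)" using Dh_eq[OF g] de' by simp
  have "\<delta> ((h * g) ^ d) = h ^ d * \<delta> (g ^ d) + g ^ d * \<delta> (h ^ d)"
    using d_mult[OF hdA gdA] by (simp add: power_mult_distrib)
  also have "\<dots> = (h * h ^ e) * (of_nat d * g ^ e * Dh g) + (g * g ^ e) * (of_nat d * h ^ e * Dh h)"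
    unfolding Eh[symmetric] Eg[symmetric] by (simp add: de')
  also have "\<dots> = of_nat d * (h * g) ^ (d - 1) * (h * Dh g + g * Dh h)"
    by (simp add: de' power_mult_distrib algebra_simps)
  finally have "of_nat d * (h * g) ^ (d - 1) * (h * Dh g + g * Dh h) = \<delta> ((h * g) ^ d)" by simp
  moreover have "h * g \<noteq> 0" using False by simp
  ultimately show ?thesis using Dh_unique by blast
qed

lemma Dh_add:
  assumes h: "h \<in> G i" and g: "g \<in> G i"
  shows "Dh (h + g) = Dh h + Dh g"
proof (cases "h = 0")
  case True then show ?thesis by (simp add: Dh_zero)
next
  case False
  define u where "u = h ^ (d - 1)"
  have uG: "u \<in> G (int (d - 1) * i)" unfolding u_def by (rule G_pow[OF h])
  have u0: "u \<noteq> 0" unfolding u_def using False by simp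
  have dv: "int d dvd (i + int (d - 1) * i)"
  proof -
    have "i + int (d - 1) * i = int d * i" using de by (metis add.commute mult.commute mult_Suc_right of_nat_Suc distrib_left mult.right_neutral)
    then show ?thesis by simp
  qed
  have hgG: "h + g \<in> G i" by (rule G_add[OF h g])
  have huG: "h * u \<in> G (i + int (d - 1) * i)" by (rule G_mult[OF h uG])
  have guG: "g * u \<in> G (i + int (d - 1) * i)" by (rule G_mult[OF g uG])
  have hguG: "(h + g) * u \<in> G (i + int (d - 1) * i)" by (rule G_mult[OF hgG uG])
  have "Dh ((h + g) * u) = \<delta> ((h + g) * u)" by (rule Dh_A[OF hguG dv])
  also have "\<dots> = \<delta> (h * u + g * u)" by (simp add: distrib_right)
  also have "\<dots> = \<delta> (h * u) + \<delta> (g * u)" by (rule d_add[OF A_hom[OF huG dv] A_hom[OF guG dv]])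
  also have "\<dots> = Dh (h * u) + Dh (g * u)" using Dh_A[OF huG dv] Dh_A[OF guG dv] by simp
  finally have "Dh ((h + g) * u) = Dh (h * u) + Dh (g * u)" .
  hence "(h + g) * Dh u + u * Dh (h + g) = (h * Dh u + u * Dh h) + (g * Dh u + u * Dh g)"
    using Dh_mult[OF hgG uG] Dh_mult[OF h uG] Dh_mult[OF g uG] by simp
  hence "u * Dh (h + g) = u * (Dh h + Dh g)" by (simp add: algebra_simps)
  then show ?thesis using u0 by simp
qed

definition Dfun :: "'a \<Rightarrow> 'a" where
  "Dfun x = (\<Sum>i\<in>supp x. Dh (comp x i))"

lemma Dfun_S:
  assumes "finite S" "supp x \<subseteq> S"
  shows "Dfun x = (\<Sum>i\<in>S. Dh (comp x i))"
  unfolding Dfun_def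
  by (rule sum.mono_neutral_left[OF assms]) (simp add: supp_def Dh_zero)

lemma supp_hom: "h \<in> G i \<Longrightarrow> supp h \<subseteq> {i}"
  by (auto simp: supp_def comp_hom split: if_splits)

lemma Dfun_hom: "h \<in> G i \<Longrightarrow> Dfun h = Dh h"
  using Dfun_S[of "{i}" h] supp_hom[of h i] by (simp add: comp_hom)

lemma Dfun_add: "Dfun (x + y) = Dfun x + Dfun y"
proof -
  let ?S = "supp x \<union> supp y"
  have fin: "finite ?S" using supp_fin by simp
  have "supp (x + y) \<subseteq> ?S" by (auto simp: supp_def comp_add)
  hence "Dfun (x + y) = (\<Sum>i\<in>?S. Dh (comp x i + comp y i))" using Dfun_S[OF fin] by (simp add: comp_add)
  also have "\<dots> = (\<Sum>i\<in>?S. Dh (comp x i) + Dh (comp y i))" using Dh_add[OF comp_G comp_G] by simp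
  also have "\<dots> = Dfun x + Dfun y" using Dfun_S[OF fin, of x] Dfun_S[OF fin, of y] by (simp add: sum.distrib)
  finally show ?thesis .
qed

lemma Dfun_zero: "Dfun 0 = 0" by (simp add: Dfun_def supp_def comp_zero)

lemma Dfun_sum: "finite T \<Longrightarrow> Dfun (\<Sum>t\<in>T. f t) = (\<Sum>t\<in>T. Dfun (f t))"
  by (induction T rule: finite_induct) (simp_all add: Dfun_zero Dfun_add)

lemma Dfun_mult: "Dfun (x * y) = x * Dfun y + y * Dfun x"
proof -
  let ?X = "supp x" and ?Y = "supp y"
  have fx: "finite ?X" and fy: "finite ?Y" using supp_fin by auto
  have "x * y = (\<Sum>i\<in>?X. comp x i) * (\<Sum>j\<in>?Y. comp y j)" by (simp only: comp_decomp)
  also have "\<dots> = (\<Sum>i\<in>?X. \<Sum>j\<in>?Y. comp x i * comp y j)" by (rule sum_product)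
  finally have xy: "x * y = (\<Sum>i\<in>?X. \<Sum>j\<in>?Y. comp x i * comp y j)" .
  have "Dfun (x * y) = (\<Sum>i\<in>?X. \<Sum>j\<in>?Y. Dfun (comp x i * comp y j))"
    unfolding xy using fx fy by (simp add: Dfun_sum)
  also have "\<dots> = (\<Sum>i\<in>?X. \<Sum>j\<in>?Y. comp x i * Dh (comp y j) + comp y j * Dh (comp x i))"
    using Dfun_hom[OF G_mult[OF comp_G comp_G]] Dh_mult[OF comp_G comp_G] by simp
  also have "\<dots> = (\<Sum>i\<in>?X. \<Sum>j\<in>?Y. comp x i * Dh (comp y j)) + (\<Sum>i\<in>?X. \<Sum>j\<in>?Y. comp y j * Dh (comp x i))"
    by (simp add: sum.distrib)
  also have "(\<Sum>i\<in>?X. \<Sum>j\<in>?Y. comp x i * Dh (comp y j)) = (\<Sum>i\<in>?X. comp x i) * (\<Sum>j\<in>?Y. Dh (comp y j))"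
    by (rule sum_product[symmetric])
  also have "(\<Sum>i\<in>?X. \<Sum>j\<in>?Y. comp y j * Dh (comp x i)) = (\<Sum>j\<in>?Y. \<Sum>i\<in>?X. comp y j * Dh (comp x i))"
    by (rule sum.swap)
  also have "\<dots> = (\<Sum>j\<in>?Y. comp y j) * (\<Sum>i\<in>?X. Dh (comp x i))"
    by (rule sum_product[symmetric])
  finally show ?thesis by (simp only: comp_decomp Dfun_def)
qed

lemma Dfun_der: "derivation_on UNIV Dfun"
  unfolding derivation_on_def using Dfun_add Dfun_mult by blast

lemma Dfun_ext: "x \<in> A \<Longrightarrow> Dfun x = \<delta> x"
proof -
  assume xA: "x \<in> A"
  hence c: "cls 0 x" using A_cls by blast
  have dvi: "int d dvd i" if "i \<in> supp x" for i using c that unfolding cls_def supp_def by auto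
  have cA: "\<forall>i\<in>supp x. comp x i \<in> A" using A_hom[OF comp_G] dvi by blast
  have "Dfun x = (\<Sum>i\<in>supp x. \<delta> (comp x i))" unfolding Dfun_def using Dh_A[OF comp_G] dvi by simp
  also have "\<dots> = \<delta> (\<Sum>i\<in>supp x. comp x i)"
    using der_sum[OF der A_zero A_addc supp_fin cA] by simp
  finally show ?thesis by (simp only: comp_decomp)
qed

lemma ext_unique:
  assumes D: "derivation_on UNIV D'" and ag: "\<forall>x\<in>A. D' x = \<delta> x"
  shows "D' = Dfun"
proof
  fix x
  have hom: "D' h = Dh h" if h: "h \<in> G i" for h i
  proof (cases "h = 0")
    case True then show ?thesis using der_zero[OF D] by (simp add: Dh_zero)
  next
    case False
    have "D' (h ^ Suc (d - 1)) = of_nat (Suc (d - 1)) * h ^ (d - 1) * D' h"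
      by (rule der_pow[OF D]) simp
    moreover have "D' (h ^ d) = \<delta> (h ^ d)" using ag A_hom[OF G_pow[OF h, of d]] by simp
    ultimately have "of_nat d * h ^ (d - 1) * D' h = \<delta> (h ^ d)" using de by simp
    then show ?thesis using Dh_unique[OF False] by simp
  qed
  have "D' x = D' (\<Sum>i\<in>supp x. comp x i)" by (simp only: comp_decomp)
  also have "\<dots> = (\<Sum>i\<in>supp x. D' (comp x i))" using der_sum[OF D _ _ supp_fin] by simp
  also have "\<dots> = Dfun x" unfolding Dfun_def using hom[OF comp_G] by simp
  finally show "D' x = Dfun x" .
qed

end

context gsetup
begin

lemma dpow_A: "x \<in> A \<Longrightarrow> (\<delta> ^^ n) x \<in> A"
  by (induction n) (simp_all add: dA)

lemma dpow_zero: "(\<delta> ^^ n) 0 = 0"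
  by (induction n) (simp_all add: d_zero)

lemma dpow_add: "x \<in> A \<Longrightarrow> y \<in> A \<Longrightarrow> (\<delta> ^^ n) (x + y) = (\<delta> ^^ n) x + (\<delta> ^^ n) y"
  by (induction n) (simp_all add: d_add dpow_A)

lemma d_of_nat: "x \<in> A \<Longrightarrow> \<delta> (of_nat c * x) = of_nat c * \<delta> x \<and> of_nat c * x \<in> A"
  using der_of_nat[OF der A_zero A_addc] by blast

lemma dpow_of_nat: "x \<in> A \<Longrightarrow> (\<delta> ^^ n) (of_nat c * x) = of_nat c * (\<delta> ^^ n) x"
  by (induction n) (simp_all add: d_of_nat dpow_A)

lemma dpow_Suc': "(\<delta> ^^ Suc n) x = (\<delta> ^^ n) (\<delta> x)"
  by (simp add: funpow_Suc_right del: funpow.simps)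

lemma dpow_upper:
  "\<forall>p e x y. p + e = n \<longrightarrow> x \<in> A \<longrightarrow> y \<in> A \<longrightarrow> (\<delta> ^^ Suc p) x = 0 \<longrightarrow> (\<delta> ^^ Suc e) y = 0
     \<longrightarrow> (\<delta> ^^ Suc n) (x * y) = 0"
proof (induction n)
  case 0
  show ?case
  proof (intro allI impI)
    fix p e x y assume "p + e = (0::nat)" "x \<in> A" "y \<in> A" "(\<delta> ^^ Suc p) x = 0" "(\<delta> ^^ Suc e) y = 0"
    then show "(\<delta> ^^ Suc 0) (x * y) = 0" by (simp add: d_mult)
  qed
next
  case (Suc n)
  show ?case
  proof (intro allI impI)
    fix p e x y assume pe: "p + e = Suc n" and xA: "x \<in> A" and yA: "y \<in> A"
      and xp: "(\<delta> ^^ Suc p) x = 0" and ye: "(\<delta> ^^ Suc e) y = 0"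
    have dxA: "\<delta> x \<in> A" and dyA: "\<delta> y \<in> A" using dA xA yA by auto
    have t1: "(\<delta> ^^ Suc n) (x * \<delta> y) = 0"
    proof (cases e)
      case 0
      then have "\<delta> y = 0" using ye by simp
      then show ?thesis by (simp add: dpow_zero d_zero)
    next
      case (Suc e')
      have "(\<delta> ^^ Suc e') (\<delta> y) = 0" using ye Suc dpow_Suc'[of e y] by simp
      moreover have "p + e' = n" using pe Suc by simp
      ultimately show ?thesis using Suc.IH xA dyA xp by blast
    qed
    have t2: "(\<delta> ^^ Suc n) (y * \<delta> x) = 0"
    proof (cases p)
      case 0
      then have "\<delta> x = 0" using xp by simp
      then show ?thesis by (simp add: dpow_zero d_zero)
    next
      case (Suc p')
      have "(\<delta> ^^ Suc p') (\<delta> x) = 0" using xp Suc dpow_Suc'[of p x] by simp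
      moreover have "e + p' = n" using pe Suc by simp
      ultimately show ?thesis using Suc.IH yA dxA ye by blast
    qed
    have "(\<delta> ^^ Suc (Suc n)) (x * y) = (\<delta> ^^ Suc n) (x * \<delta> y + y * \<delta> x)"
      using dpow_Suc'[of "Suc n" "x * y"] d_mult[OF xA yA] by simp
    also have "\<dots> = 0" by (simp only: dpow_add[OF A_mult[OF xA dyA] A_mult[OF yA dxA]] t1 t2 add_0_left)
    finally show "(\<delta> ^^ Suc (Suc n)) (x * y) = 0" .
  qed
qed

lemma dpow_upper':
  "x \<in> A \<Longrightarrow> y \<in> A \<Longrightarrow> (\<delta> ^^ Suc p) x = 0 \<Longrightarrow> (\<delta> ^^ Suc e) y = 0 \<Longrightarrow> (\<delta> ^^ Suc (p + e)) (x * y) = 0"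
  using dpow_upper by blast

lemma dpow_exact:
  "\<forall>p e x y. p + e = n \<longrightarrow> x \<in> A \<longrightarrow> y \<in> A \<longrightarrow> (\<delta> ^^ Suc p) x = 0 \<longrightarrow> (\<delta> ^^ Suc e) y = 0
     \<longrightarrow> (\<exists>c>0. (\<delta> ^^ n) (x * y) = of_nat c * ((\<delta> ^^ p) x * (\<delta> ^^ e) y))"
proof (induction n)
  case 0
  show ?case
  proof (intro allI impI)
    fix p e x y assume "p + e = (0::nat)"
    then show "\<exists>c>0. (\<delta> ^^ 0) (x * y) = of_nat c * ((\<delta> ^^ p) x * (\<delta> ^^ e) y)"
      by (intro exI[of _ 1]) simp
  qed
next
  case (Suc n)
  show ?case
  proof (intro allI impI)
    fix p e x y assume pe: "p + e = Suc n" and xA: "x \<in> A" and yA: "y \<in> A"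
      and xp: "(\<delta> ^^ Suc p) x = 0" and ye: "(\<delta> ^^ Suc e) y = 0"
    have dxA: "\<delta> x \<in> A" and dyA: "\<delta> y \<in> A" using dA xA yA by auto
    have t1: "\<exists>c1. (e \<noteq> 0 \<longrightarrow> c1 > 0) \<and> (\<delta> ^^ n) (x * \<delta> y) = of_nat c1 * ((\<delta> ^^ p) x * (\<delta> ^^ e) y)"
    proof (cases e)
      case 0
      then have "\<delta> y = 0" using ye by simp
      then show ?thesis using 0 by (intro exI[of _ 0]) (simp add: dpow_zero d_zero)
    next
      case (Suc e')
      have "(\<delta> ^^ Suc e') (\<delta> y) = 0" using ye Suc dpow_Suc'[of e y] by simp
      moreover have "p + e' = n" using pe Suc by simp
      ultimately obtain c where "c > 0" "(\<delta> ^^ n) (x * \<delta> y) = of_nat c * ((\<delta> ^^ p) x * (\<delta> ^^ e') (\<delta> y))"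
        using Suc.IH xA dyA xp by blast
      moreover have "(\<delta> ^^ e') (\<delta> y) = (\<delta> ^^ e) y" using Suc dpow_Suc'[of e' y] by simp
      ultimately show ?thesis by (intro exI[of _ c]) simp
    qed
    have t2: "\<exists>c2. (p \<noteq> 0 \<longrightarrow> c2 > 0) \<and> (\<delta> ^^ n) (y * \<delta> x) = of_nat c2 * ((\<delta> ^^ p) x * (\<delta> ^^ e) y)"
    proof (cases p)
      case 0
      then have "\<delta> x = 0" using xp by simp
      then show ?thesis using 0 by (intro exI[of _ 0]) (simp add: dpow_zero d_zero)
    next
      case (Suc p')
      have "(\<delta> ^^ Suc p') (\<delta> x) = 0" using xp Suc dpow_Suc'[of p x] by simp
      moreover have "e + p' = n" using pe Suc by simp
      ultimately obtain c where "c > 0" "(\<delta> ^^ n) (y * \<delta> x) = of_nat c * ((\<delta> ^^ e) y * (\<delta> ^^ p') (\<delta> x))"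
        using Suc.IH yA dxA ye by blast
      moreover have "(\<delta> ^^ p') (\<delta> x) = (\<delta> ^^ p) x" using Suc dpow_Suc'[of p' x] by simp
      ultimately show ?thesis by (intro exI[of _ c]) (simp add: mult.commute)
    qed
    obtain c1 where c1: "e \<noteq> 0 \<longrightarrow> c1 > 0" "(\<delta> ^^ n) (x * \<delta> y) = of_nat c1 * ((\<delta> ^^ p) x * (\<delta> ^^ e) y)"
      using t1 by blast
    obtain c2 where c2: "p \<noteq> 0 \<longrightarrow> c2 > 0" "(\<delta> ^^ n) (y * \<delta> x) = of_nat c2 * ((\<delta> ^^ p) x * (\<delta> ^^ e) y)"
      using t2 by blast
    have "(\<delta> ^^ Suc n) (x * y) = (\<delta> ^^ n) (x * \<delta> y + y * \<delta> x)"
      using dpow_Suc'[of n "x * y"] d_mult[OF xA yA] by simp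
    also have "\<dots> = (\<delta> ^^ n) (x * \<delta> y) + (\<delta> ^^ n) (y * \<delta> x)"
      using dpow_add[OF A_mult[OF xA dyA] A_mult[OF yA dxA]] by simp
    also have "\<dots> = of_nat (c1 + c2) * ((\<delta> ^^ p) x * (\<delta> ^^ e) y)"
      using c1(2) c2(2) by (simp add: distrib_right)
    finally show "\<exists>c>0. (\<delta> ^^ Suc n) (x * y) = of_nat c * ((\<delta> ^^ p) x * (\<delta> ^^ e) y)"
      using c1(1) c2(1) pe by (intro exI[of _ "c1 + c2"]) auto
  qed
qed

lemma dpow_exact':
  "x \<in> A \<Longrightarrow> y \<in> A \<Longrightarrow> (\<delta> ^^ Suc p) x = 0 \<Longrightarrow> (\<delta> ^^ Suc e) y = 0
    \<Longrightarrow> \<exists>c>0. (\<delta> ^^ (p + e)) (x * y) = of_nat c * ((\<delta> ^^ p) x * (\<delta> ^^ e) y)"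
  using dpow_exact by blast

definition dg :: "'a \<Rightarrow> nat" where "dg x = (LEAST n. (\<delta> ^^ Suc n) x = 0)"

lemma dg_spec:
  assumes lnd: "locally_nilpotent_on A \<delta>" and xA: "x \<in> A"
  shows "(\<delta> ^^ Suc (dg x)) x = 0"
proof -
  obtain n where "(\<delta> ^^ n) x = 0" using lnd xA unfolding locally_nilpotent_on_def by blast
  hence "(\<delta> ^^ Suc n) x = 0" by (simp add: d_zero)
  then show ?thesis unfolding dg_def by (rule LeastI)
qed

lemma dg_nz:
  assumes "x \<noteq> 0"
  shows "(\<delta> ^^ dg x) x \<noteq> 0"
proof (cases "dg x")
  case 0 then show ?thesis using assms by simp
next
  case (Suc m)
  have "m < dg x" using Suc by simp
  hence "\<not> (\<delta> ^^ Suc m) x = 0" unfolding dg_def by (rule not_less_Least)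
  then show ?thesis using Suc by simp
qed

lemma dpow_vanish_mono: "(\<delta> ^^ m) x = 0 \<Longrightarrow> m \<le> n \<Longrightarrow> (\<delta> ^^ n) x = 0"
proof -
  assume a: "(\<delta> ^^ m) x = 0" "m \<le> n"
  then obtain k where "n = k + m" by (metis add.commute le_add_diff_inverse)
  then show ?thesis using a(1) by (simp add: funpow_add dpow_zero)
qed

end

context gfull
begin

lemma Dh_cls:
  assumes h: "h \<in> G i"
  shows "cls i (Dh h)"
proof (cases "h = 0")
  case True then show ?thesis by (simp add: Dh_zero cls_zero)
next
  case False
  define k where "k = int (d - 1) * i"
  define g where "g = h ^ (d - 1)"
  define z where "z = of_nat d * Dh h"
  have gG: "g \<in> G k" unfolding g_def k_def by (rule G_pow[OF h])
  have g0: "g \<noteq> 0" unfolding g_def using False by simp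
  have gz: "g * z = \<delta> (h ^ d)" using Dh_eq[OF h] unfolding g_def z_def by (simp add: mult_ac)
  have hdA: "h ^ d \<in> A" using A_hom[OF G_pow[OF h, of d]] by simp
  have c0: "cls 0 (g * z)" using gz dA[OF hdA] A_cls by simp
  show ?thesis unfolding cls_def
  proof (intro allI impI)
    fix j assume cj: "comp (Dh h) j \<noteq> 0"
    have "comp z j = of_nat d * comp (Dh h) j" unfolding z_def by (simp add: comp_of_nat)
    hence "comp z j \<noteq> 0" using cj dnz by simp
    hence "comp (g * z) (j + k) \<noteq> 0" using g0 by (simp add: comp_mult_hom[OF gG])
    hence dv: "int d dvd (j + k)" using c0 unfolding cls_def by fastforce
    have eqji: "j - i = (j + k) - int d * i" unfolding k_def using d0 by (simp add: of_nat_diff algebra_simps)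
    have "int d dvd (j + k) - int d * i" by (rule dvd_diff[OF dv]) simp
    then show "int d dvd (j - i)" unfolding eqji .
  qed
qed

lemma Dfun_cls:
  assumes x: "cls r x"
  shows "cls r (Dfun x)"
proof -
  have "cls r (Dh (comp x j))" if "j \<in> supp x" for j
  proof -
    have "int d dvd (j - r)" using x that unfolding cls_def supp_def by blast
    then show ?thesis using Dh_cls[OF comp_G] cls_shift by blast
  qed
  then show ?thesis unfolding Dfun_def using cls_sum[OF supp_fin[of x], where r=r and f="\<lambda>j. Dh (comp x j)"] by blast
qed

lemma Dfun_iter_cls: "cls r x \<Longrightarrow> cls r ((Dfun ^^ k) x)"
  by (induction k) (simp_all add: Dfun_cls)

lemma Dfun_pow: "Dfun (x ^ Suc n) = of_nat (Suc n) * x ^ n * Dfun x"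
  using der_pow[OF Dfun_der] by simp

lemma key_identity:
  fixes h z :: 'a
  defines "a \<equiv> h ^ d"
  shows "of_nat d * (a * (h ^ (d - 1) * Dfun z)) + of_nat (d - 1) * (Dfun a * (h ^ (d - 1) * z))
       = of_nat d * (a * Dfun (h ^ (d - 1) * z))"
proof -
  obtain m where m: "d = Suc (Suc m)" using d2 by (metis add_2_eq_Suc le_Suc_ex)
  have hd: "h ^ d = h ^ Suc (Suc m)" using m by simp
  have dm1: "d - 1 = Suc m" using m by simp
  have od: "(of_nat d :: 'a) = of_nat (Suc (Suc m))" using m by simp
  have Da: "Dfun (h ^ Suc (Suc m)) = of_nat (Suc (Suc m)) * h ^ Suc m * Dfun h" by (rule Dfun_pow)
  have Dq: "Dfun (h ^ Suc m * z) = h ^ Suc m * Dfun z + z * (of_nat (Suc m) * h ^ m * Dfun h)"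
    using Dfun_mult Dfun_pow by simp
  show ?thesis unfolding a_def hd dm1 od Da Dq
    by (simp add: algebra_simps)
qed

lemma lnd_hom:
  assumes lnd: "locally_nilpotent_on A \<delta>" and h: "h \<in> G i"
  shows "\<exists>k. (Dfun ^^ k) h = 0"
proof (rule ccontr)
  assume "\<not> ?thesis"
  hence nz: "\<forall>k. (Dfun ^^ k) h \<noteq> 0" by blast
  hence h0: "h \<noteq> 0" using spec[OF nz, of 0] by simp
  define a where "a = h ^ d"
  define q where "q k = h ^ (d - 1) * (Dfun ^^ k) h" for k
  have aA: "a \<in> A" unfolding a_def using A_hom[OF G_pow[OF h, of d]] by simp
  have a0: "a \<noteq> 0" unfolding a_def using h0 by simp
  have qA: "q k \<in> A" for k
  proof -
    have c1: "cls (int (d - 1) * i) (h ^ (d - 1))" by (rule cls_hom[OF G_pow[OF h]])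
    have c2: "cls i ((Dfun ^^ k) h)" by (rule Dfun_iter_cls[OF cls_hom[OF h]])
    have c3: "cls (int (d - 1) * i + i) (q k)" unfolding q_def by (rule cls_mult[OF c1 c2])
    have "int (d - 1) * i + i = int d * i" using d0 by (simp add: of_nat_diff algebra_simps)
    hence "cls 0 (q k)" using c3 cls_shift[of "int (d - 1) * i + i" "q k" 0] by simp
    then show ?thesis using A_cls by blast
  qed
  have q0: "q k \<noteq> 0" for k unfolding q_def using h0 nz by simp
  have idn: "of_nat d * (a * q (Suc k)) + of_nat (d - 1) * (\<delta> a * q k) = of_nat d * (a * \<delta> (q k))" for k
  proof -
    have "q (Suc k) = h ^ (d - 1) * Dfun ((Dfun ^^ k) h)" unfolding q_def by simp
    then show ?thesis using key_identity[of h "(Dfun ^^ k) h"] Dfun_ext[OF aA] Dfun_ext[OF qA[of k]]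
      unfolding a_def q_def by simp
  qed
  have dec: "dg (q (Suc k)) < dg (q k)" for k
  proof (rule ccontr)
    assume ge: "\<not> dg (q (Suc k)) < dg (q k)"
    define p where "p = dg a"
    define e where "e = dg (q k)"
    define e' where "e' = dg (q (Suc k))"
    have ap: "(\<delta> ^^ Suc p) a = 0" unfolding p_def by (rule dg_spec[OF lnd aA])
    have qe: "(\<delta> ^^ Suc e) (q k) = 0" unfolding e_def by (rule dg_spec[OF lnd qA])
    have qe': "(\<delta> ^^ Suc e') (q (Suc k)) = 0" unfolding e'_def by (rule dg_spec[OF lnd qA])
    have dqA: "\<delta> (q k) \<in> A" by (rule dA[OF qA])
    have daA: "\<delta> a \<in> A" by (rule dA[OF aA])
    obtain c where c: "c > 0" "(\<delta> ^^ (p + e')) (a * q (Suc k)) = of_nat c * ((\<delta> ^^ p) a * (\<delta> ^^ e') (q (Suc k)))"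
      using dpow_exact'[OF aA qA ap qe'] by blast
    have "(\<delta> ^^ p) a \<noteq> 0" unfolding p_def by (rule dg_nz[OF a0])
    moreover have "(\<delta> ^^ e') (q (Suc k)) \<noteq> 0" unfolding e'_def by (rule dg_nz[OF q0])
    moreover have "(of_nat c :: 'a) \<noteq> 0" using c(1) by simp
    ultimately have Lnz: "(\<delta> ^^ (p + e')) (a * q (Suc k)) \<noteq> 0" using c(2) by simp
    have T1: "(\<delta> ^^ (p + e)) (a * \<delta> (q k)) = 0"
    proof (cases e)
      case 0
      then have "\<delta> (q k) = 0" using qe by simp
      then show ?thesis by (simp add: dpow_zero d_zero)
    next
      case (Suc e0)
      have "(\<delta> ^^ Suc e0) (\<delta> (q k)) = 0" using qe Suc dpow_Suc'[of e "q k"] by simp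
      then have "(\<delta> ^^ Suc (p + e0)) (a * \<delta> (q k)) = 0" by (rule dpow_upper'[OF aA dqA ap])
      then show ?thesis using Suc by simp
    qed
    have T2: "(\<delta> ^^ (p + e)) (\<delta> a * q k) = 0"
    proof (cases p)
      case 0
      then have "\<delta> a = 0" using ap by simp
      then show ?thesis by (simp add: dpow_zero d_zero)
    next
      case (Suc p0)
      have "(\<delta> ^^ Suc p0) (\<delta> a) = 0" using ap Suc dpow_Suc'[of p a] by simp
      then have "(\<delta> ^^ Suc (p0 + e)) (\<delta> a * q k) = 0" by (rule dpow_upper'[OF daA qA _ qe])
      then show ?thesis using Suc by simp
    qed
    have m1: "a * q (Suc k) \<in> A" by (rule A_mult[OF aA qA])
    have m2: "\<delta> a * q k \<in> A" by (rule A_mult[OF daA qA])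
    have m3: "a * \<delta> (q k) \<in> A" by (rule A_mult[OF aA dqA])
    have "(\<delta> ^^ (p + e)) (of_nat d * (a * q (Suc k)) + of_nat (d - 1) * (\<delta> a * q k))
        = (\<delta> ^^ (p + e)) (of_nat d * (a * \<delta> (q k)))" using idn[of k] by simp
    hence "of_nat d * (\<delta> ^^ (p + e)) (a * q (Suc k)) + of_nat (d - 1) * (\<delta> ^^ (p + e)) (\<delta> a * q k)
        = of_nat d * (\<delta> ^^ (p + e)) (a * \<delta> (q k))"
      using dpow_add[OF conjunct2[OF d_of_nat[OF m1]] conjunct2[OF d_of_nat[OF m2]]]
        dpow_of_nat[OF m1] dpow_of_nat[OF m2] dpow_of_nat[OF m3] by simp
    hence "of_nat d * (\<delta> ^^ (p + e)) (a * q (Suc k)) = 0" using T1 T2 by simp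
    hence z: "(\<delta> ^^ (p + e)) (a * q (Suc k)) = 0" using dnz by simp
    have "p + e \<le> p + e'" using ge unfolding e_def e'_def by simp
    with z have "(\<delta> ^^ (p + e')) (a * q (Suc k)) = 0" by (rule dpow_vanish_mono)
    with Lnz show False by contradiction
  qed
  have bound: "dg (q k) + k \<le> dg (q 0)" for k
  proof (induction k)
    case 0 then show ?case by simp
  next
    case (Suc k) then show ?case using dec[of k] by simp
  qed
  from bound[of "Suc (dg (q 0))"] show False by simp
qed

lemma Dfun_iter_zero: "(Dfun ^^ n) 0 = 0"
  by (induction n) (simp_all add: Dfun_zero)

lemma Dfun_iter_sum: "finite T \<Longrightarrow> (Dfun ^^ n) (\<Sum>t\<in>T. f t) = (\<Sum>t\<in>T. (Dfun ^^ n) (f t))"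
  by (induction n) (simp_all add: Dfun_sum)

lemma Dfun_iter_mono: "(Dfun ^^ m) x = 0 \<Longrightarrow> m \<le> n \<Longrightarrow> (Dfun ^^ n) x = 0"
proof -
  assume a: "(Dfun ^^ m) x = 0" "m \<le> n"
  then obtain k where "n = k + m" by (metis add.commute le_add_diff_inverse)
  then show ?thesis using a(1) by (simp add: funpow_add Dfun_iter_zero)
qed

lemma lnd_all:
  assumes lnd: "locally_nilpotent_on A \<delta>"
  shows "locally_nilpotent_on UNIV Dfun"
  unfolding locally_nilpotent_on_def
proof
  fix x :: 'a
  have "\<forall>i. \<exists>k. (Dfun ^^ k) (comp x i) = 0" using lnd_hom[OF lnd comp_G] by blast
  then obtain kf where kf: "\<And>i. (Dfun ^^ kf i) (comp x i) = 0" by metis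
  define N where "N = (\<Sum>i\<in>supp x. kf i)"
  have "(Dfun ^^ N) (comp x i) = 0" if "i \<in> supp x" for i
    using Dfun_iter_mono[OF kf] member_le_sum[OF that _ supp_fin, of kf] unfolding N_def by simp
  hence "(Dfun ^^ N) (\<Sum>i\<in>supp x. comp x i) = 0" using Dfun_iter_sum[OF supp_fin] by simp
  then show "\<exists>n. (Dfun ^^ n) x = 0" by (auto simp only: comp_decomp)
qed

end

theorem lemma3p9:
  fixes G :: "int \<Rightarrow> 'a::{idom, ring_char_0} set"
    and d :: nat
    and \<delta> :: "'a \<Rightarrow> 'a"
  assumes "Z_grading G"
    and "noetherian_ring TYPE('a)"
    and "normal_domain TYPE('a)"
    and "grading_e G = 1"
    and "d \<ge> 2"
    and "(of_nat d :: 'a) dvd 1"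
    and "\<forall>P. height_one_prime P \<longrightarrow> \<not> X_set G d \<subseteq> P"
    and "derivation_on (veronese G d) \<delta>"
  shows "(\<exists>!D. derivation_on UNIV D \<and> (\<forall>x\<in>veronese G d. D x = \<delta> x))
    \<and> (locally_nilpotent_on (veronese G d) \<delta> \<longrightarrow>
         (\<forall>D. derivation_on UNIV D \<and> (\<forall>x\<in>veronese G d. D x = \<delta> x) \<longrightarrow> locally_nilpotent_on UNIV D))"
proof -
  interpret g: gfull G d \<delta>
    using assms by (simp add: gfull_def gsetup_def gfull_axioms_def gsetup_axioms_def grd_def)
  have ex: "derivation_on UNIV g.Dfun \<and> (\<forall>x\<in>veronese G d. g.Dfun x = \<delta> x)"
    using g.Dfun_der g.Dfun_ext by blast
  have un: "D = g.Dfun" if "derivation_on UNIV D \<and> (\<forall>x\<in>veronese G d. D x = \<delta> x)" for D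
    using g.ext_unique that by blast
  have "\<exists>!D. derivation_on UNIV D \<and> (\<forall>x\<in>veronese G d. D x = \<delta> x)"
    using ex un by blast
  moreover have "locally_nilpotent_on (veronese G d) \<delta> \<longrightarrow>
         (\<forall>D. derivation_on UNIV D \<and> (\<forall>x\<in>veronese G d. D x = \<delta> x) \<longrightarrow> locally_nilpotent_on UNIV D)"
    using un g.lnd_all by blast
  ultimately show ?thesis by blast
qed

end
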